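(* Let $G$ be a connected graph with minimum degree $\delta(G)\geq 3$, and let $v\in V(G)$. Suppose every vertex of $N_i(v)$ for $i=2,3,\ldots,\epsilon(v)-1$ has exactly two predecessors, each $N_i(v)$ is an independent set, and $|N_j(v)|=|N_{j-1}(v)|=|N_{j-2}(v)|=3$ for some index $3\le j\le \epsilon(v)-1$. Then $q(G)\geq 3$.
   Context: For a graph $G$ on $n$ vertices, $\mathcal{S}(G)$ is the set of real symmetric $n\times n$ matrices $A=[a_{ij}]$ with $a_{ij}\neq0$ for $i\ne j$ iff $\{i,j\}\in E(G)$ (diagonal unrestricted); $q(G)$ is the minimum number of distinct eigenvalues of a matrix in $\mathcal{S}(G)$. For $v\in V(G)$, $N_i(v)$ is the set of vertices at distance exactly $i$ from $v$, and $\epsilon(v)$ is the maximum distance from $v$ to a vertex of $G$. If $u\in N_{i-1}(v)$ and $w\in N_i(v)$ are adjacent, $u$ is a predecessor of $w$ and $w$ a successor of $u$. *)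

theory Defs
  imports "HOL-Analysis.Analysis"
begin

definition simple_graph :: "('n::finite \<Rightarrow> 'n \<Rightarrow> bool) \<Rightarrow> bool" where
  "simple_graph E \<longleftrightarrow> (\<forall>u. \<not> E u u) \<and> (\<forall>u w. E u w \<longrightarrow> E w u)"

definition connected_graph :: "('n::finite \<Rightarrow> 'n \<Rightarrow> bool) \<Rightarrow> bool" where
  "connected_graph E \<longleftrightarrow> (\<forall>u w. E\<^sup>*\<^sup>* u w)"

definition degree :: "('n::finite \<Rightarrow> 'n \<Rightarrow> bool) \<Rightarrow> 'n \<Rightarrow> nat" where
  "degree E u = card {w. E u w}"

definition gdist :: "('n::finite \<Rightarrow> 'n \<Rightarrow> bool) \<Rightarrow> 'n \<Rightarrow> 'n \<Rightarrow> nat" where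
  "gdist E u w = (LEAST k. (E ^^ k) u w)"

definition layer :: "('n::finite \<Rightarrow> 'n \<Rightarrow> bool) \<Rightarrow> 'n \<Rightarrow> nat \<Rightarrow> 'n set" where
  "layer E v i = {w. gdist E v w = i}"

definition ecc :: "('n::finite \<Rightarrow> 'n \<Rightarrow> bool) \<Rightarrow> 'n \<Rightarrow> nat" where
  "ecc E v = Max (range (gdist E v))"

definition predecessors :: "('n::finite \<Rightarrow> 'n \<Rightarrow> bool) \<Rightarrow> 'n \<Rightarrow> 'n \<Rightarrow> 'n set" where
  "predecessors E v w = {u. gdist E v u + 1 = gdist E v w \<and> E u w}"

definition independent_set :: "('n::finite \<Rightarrow> 'n \<Rightarrow> bool) \<Rightarrow> 'n set \<Rightarrow> bool" where
  "independent_set E S \<longleftrightarrow> (\<forall>a\<in>S. \<forall>b\<in>S. \<not> E a b)"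

definition SG :: "('n::finite \<Rightarrow> 'n \<Rightarrow> bool) \<Rightarrow> (real^'n^'n) set" where
  "SG E = {A. (\<forall>i j. A$i$j = A$j$i) \<and> (\<forall>i j. i \<noteq> j \<longrightarrow> (A$i$j \<noteq> 0 \<longleftrightarrow> E i j))}"

definition is_eigenvalue :: "real^'n^'n \<Rightarrow> real \<Rightarrow> bool" where
  "is_eigenvalue A c \<longleftrightarrow> (\<exists>x. x \<noteq> 0 \<and> A *v x = c *\<^sub>R x)"

definition num_distinct_eigenvalues :: "real^'n^'n \<Rightarrow> nat" where
  "num_distinct_eigenvalues A = card {c. is_eigenvalue A c}"

definition qG :: "('n::finite \<Rightarrow> 'n \<Rightarrow> bool) \<Rightarrow> nat" where
  "qG E = (LEAST k. \<exists>A\<in>SG E. num_distinct_eigenvalues A = k)"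

end

theory Submission
  imports Defs
begin


lemma sym_inner:
  fixes A :: "real^'n^'n"
  assumes sym: "\<forall>i j. A$i$j = A$j$i"
  shows "(A *v x) \<bullet> y = x \<bullet> (A *v y)"
proof -
  have "transpose A = A" using sym by (simp add: transpose_def vec_eq_iff)
  hence "A *v x = x v* A" by (metis transpose_matrix_vector)
  thus ?thesis by (simp add: dot_lmul_matrix)
qed

lemma quad_aux:
  fixes R q :: real
  assumes "\<forall>t::real. 2*t*R + t*t*q \<le> 0" and "R \<ge> 0"
  shows "R = 0"
proof (rule ccontr)
  assume "R \<noteq> 0" hence R: "R > 0" using assms by simp
  define t where "t = R/(\<bar>q\<bar>+1)"
  have t: "t > 0" using R by (simp add: t_def)
  have "t*\<bar>q\<bar> \<le> R" using R unfolding t_def by (simp add: field_simps)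
  hence "t*t*\<bar>q\<bar> \<le> t*R" using t by (metis mult.assoc mult_le_cancel_left_pos)
  moreover have "t*t*(-\<bar>q\<bar>) \<le> t*t*q" by (rule mult_left_mono) auto
  moreover have "2*t*R + t*t*q \<le> 0" using assms by blast
  ultimately have "t*R \<le> 0" by linarith
  thus False using mult_pos_pos[OF t R] by linarith
qed

lemma sym_eig:
  fixes A :: "real^'n^'n"
  assumes sym: "\<forall>i j. A$i$j = A$j$i" and W: "subspace W"
    and inv: "\<forall>x\<in>W. A *v x \<in> W" and ne: "\<exists>x\<in>W. x \<noteq> 0"
  shows "\<exists>x\<in>W. x \<noteq> 0 \<and> (\<exists>c. A *v x = c *\<^sub>R x)"
proof -
  define K where "K = sphere 0 1 \<inter> W"
  have cK: "compact K" unfolding K_def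
    by (rule compact_Int_closed) (simp_all add: W closed_subspace)
  obtain x1 where x1: "x1 \<in> W" "x1 \<noteq> 0" using ne by blast
  have "(1/norm x1) *\<^sub>R x1 \<in> K" using x1 W unfolding K_def
    by (simp add: subspace_scale)
  hence neK: "K \<noteq> {}" by blast
  define f where "f = (\<lambda>x::real^'n. x \<bullet> (A *v x))"
  have cf: "continuous_on K f" unfolding f_def
    by (intro continuous_intros matrix_vector_mult_linear_continuous_on[unfolded comp_def])
  obtain x0 where x0: "x0 \<in> K" and mx: "\<forall>y\<in>K. f y \<le> f x0"
    using continuous_attains_sup[OF cK neK cf] by blast
  define l where "l = f x0"
  have x0W: "x0 \<in> W" and nx0: "norm x0 = 1" using x0 by (auto simp: K_def)
  have bound: "f y \<le> l * (y \<bullet> y)" if yW: "y \<in> W" for y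
  proof (cases "y = 0")
    case True thus ?thesis by (simp add: f_def)
  next
    case False
    define u where "u = (1/norm y) *\<^sub>R y"
    have "u \<in> K" using yW False W unfolding K_def u_def by (simp add: subspace_scale)
    hence "f u \<le> l" using mx l_def by blast
    moreover have "f u = f y / (norm y)^2" unfolding f_def u_def
      by (simp add: matrix_vector_mult_scaleR power2_eq_square)
    moreover have "y \<bullet> y = (norm y)^2" by (simp add: power2_norm_eq_inner)
    moreover have "norm y > 0" using False by simp
    ultimately show ?thesis by (simp add: field_simps)
  qed
  define r where "r = A *v x0 - l *\<^sub>R x0"
  have rW: "r \<in> W" unfolding r_def using inv x0W W by (simp add: subspace_diff subspace_scale)
  have x0x0: "x0 \<bullet> x0 = 1" using nx0 by (metis norm_eq_1)
  have key: "2*t*(r \<bullet> r) + t*t*(r \<bullet> (A *v r) - l*(r \<bullet> r)) \<le> 0" for t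
  proof -
    have "x0 + t *\<^sub>R r \<in> W" using x0W rW W by (simp add: subspace_add subspace_scale)
    hence b: "f (x0 + t *\<^sub>R r) \<le> l * ((x0 + t *\<^sub>R r) \<bullet> (x0 + t *\<^sub>R r))" by (rule bound)
    have s: "x0 \<bullet> (A *v r) = r \<bullet> (A *v x0)" using sym_inner[OF sym, of r x0] by (simp add: inner_commute)
    have e1: "f (x0 + t *\<^sub>R r) = l + 2*t*(r \<bullet> (A *v x0)) + t*t*(r \<bullet> (A *v r))"
      unfolding f_def using s
      by (simp add: matrix_vector_right_distrib matrix_vector_mult_scaleR inner_add_left inner_add_right l_def f_def algebra_simps)
    have e2: "(x0 + t *\<^sub>R r) \<bullet> (x0 + t *\<^sub>R r) = 1 + 2*t*(r \<bullet> x0) + t*t*(r \<bullet> r)"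
      proof -
      have "x0 \<bullet> r = r \<bullet> x0" by (rule inner_commute)
      thus ?thesis using x0x0 by (simp add: inner_add_left inner_add_right algebra_simps)
    qed
    have e3: "r \<bullet> (A *v x0) = r \<bullet> r + l * (r \<bullet> x0)"
      unfolding r_def by (simp add: inner_diff_left inner_diff_right inner_commute algebra_simps)
    have "l + 2*t*(r \<bullet> (A *v x0)) + t*t*(r \<bullet> (A *v r)) \<le> l * (1 + 2*t*(r \<bullet> x0) + t*t*(r \<bullet> r))"
      using b unfolding e1 e2 .
    thus ?thesis unfolding e3 by (simp add: algebra_simps)
  qed
  have "r \<bullet> r = 0" by (rule quad_aux) (use key in auto)
  hence "A *v x0 = l *\<^sub>R x0" unfolding r_def by simp
  moreover have "x0 \<noteq> 0" using nx0 by auto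
  ultimately show ?thesis using x0W by blast
qed



lemma gen_ab: "(p::'a::ab_group_add) - q + r = 0 \<Longrightarrow> p = q - r"
  by (simp add: algebra_simps)

lemma eig_finite:
  fixes A :: "real^'n^'n"
  assumes sym: "\<forall>i j. A$i$j = A$j$i"
  shows "finite {c. is_eigenvalue A c}"
proof -
  define S where "S = {c. is_eigenvalue A c}"
  define f where "f c = (SOME x. x \<noteq> 0 \<and> A *v x = c *\<^sub>R x)" for c
  have fS: "f c \<noteq> 0 \<and> A *v f c = c *\<^sub>R f c" if "c \<in> S" for c
  proof -
    have "is_eigenvalue A c" using that unfolding S_def by simp
    then obtain x where "x \<noteq> 0 \<and> A *v x = c *\<^sub>R x" unfolding is_eigenvalue_def by (elim exE)
    thus ?thesis unfolding f_def by (rule someI)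
  qed
  have inj: "inj_on f S"
  proof (rule inj_onI)
    fix c d assume c: "c \<in> S" and d: "d \<in> S" and e: "f c = f d"
    have fc: "f c \<noteq> 0" "A *v f c = c *\<^sub>R f c" using fS[OF c] by auto
    have fd: "A *v f d = d *\<^sub>R f d" using fS[OF d] by auto
    have "c *\<^sub>R f c = A *v f c" using fc by simp
    also have "\<dots> = A *v f d" using e by simp
    also have "\<dots> = d *\<^sub>R f d" using fd by simp
    also have "\<dots> = d *\<^sub>R f c" using e by simp
    finally have "(c - d) *\<^sub>R f c = 0" by (simp add: scaleR_diff_left)
    thus "c = d" using fc(1) by simp
  qed
  have "pairwise orthogonal (f ` S)"
  proof (clarsimp simp: pairwise_def)
    fix c d assume c: "c \<in> S" and d: "d \<in> S" and ne: "f c \<noteq> f d"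
    hence "c \<noteq> d" by auto
    have "c * (f c \<bullet> f d) = (A *v f c) \<bullet> f d" using fS[OF c] by simp
    also have "\<dots> = f c \<bullet> (A *v f d)" by (rule sym_inner[OF sym])
    also have "\<dots> = d * (f c \<bullet> f d)" using fS[OF d] by simp
    finally have "(c - d) * (f c \<bullet> f d) = 0" by (simp add: algebra_simps)
    thus "orthogonal (f c) (f d)" using \<open>c \<noteq> d\<close> by (simp add: orthogonal_def)
  qed
  hence "finite (f ` S)" by (rule pairwise_orthogonal_imp_finite)
  hence "finite S" using finite_imageD[OF _ inj] by blast
  thus ?thesis unfolding S_def .
qed

lemma quad_rel:
  fixes A :: "real^'n^'n"
  assumes sym: "\<forall>i j. A$i$j = A$j$i"
    and S: "{c. is_eigenvalue A c} \<subseteq> {a, b}"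
  shows "\<forall>y. A *v (A *v y) = (a+b) *\<^sub>R (A *v y) - (a*b) *\<^sub>R y"
proof -
  define B where "B y = A *v (A *v y) - (a+b) *\<^sub>R (A *v y) + (a*b) *\<^sub>R y" for y
  have Badd: "B (x + y) = B x + B y" for x y
    unfolding B_def by (simp add: matrix_vector_right_distrib algebra_simps)
  have Bscale: "B (c *\<^sub>R x) = c *\<^sub>R B x" for c x
    unfolding B_def by (simp add: matrix_vector_mult_scaleR algebra_simps)
  have Bdiff: "A *v (x - y) = A *v x - A *v y" for x y
    by (metis add_diff_cancel matrix_vector_right_distrib diff_add_cancel)
  have AB: "A *v B y = B (A *v y)" for y
    unfolding B_def by (simp add: matrix_vector_right_distrib matrix_vector_mult_scaleR Bdiff)
  have Bsym: "B x \<bullet> y = x \<bullet> B y" for x y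
  proof -
    have s1: "(A *v x) \<bullet> y = x \<bullet> (A *v y)" for x y by (rule sym_inner[OF sym])
    have "B x \<bullet> y = (A *v (A *v x)) \<bullet> y - (a+b) * ((A *v x) \<bullet> y) + (a*b) * (x \<bullet> y)"
      unfolding B_def by (simp add: inner_diff_left inner_add_left)
    also have "\<dots> = x \<bullet> (A *v (A *v y)) - (a+b) * (x \<bullet> (A *v y)) + (a*b) * (x \<bullet> y)"
      using s1 by metis
    also have "\<dots> = x \<bullet> B y" unfolding B_def by (simp add: inner_diff_right inner_add_right)
    finally show ?thesis .
  qed
  have W: "subspace (range B)"
    unfolding subspace_def
  proof (intro conjI ballI allI)
    have "B 0 = 0" by (simp add: B_def)
    thus "0 \<in> range B" by (metis rangeI)
    fix x y assume "x \<in> range B" "y \<in> range B"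
    then obtain u w where "x = B u" "y = B w" by blast
    hence "x + y = B (u + w)" using Badd by simp
    thus "x + y \<in> range B" by blast
  next
    fix c x assume "x \<in> range B"
    then obtain u where "x = B u" by blast
    hence "c *\<^sub>R x = B (c *\<^sub>R u)" using Bscale by simp
    thus "c *\<^sub>R x \<in> range B" by blast
  qed
  have Binv: "\<forall>x\<in>range B. A *v x \<in> range B" using AB by auto
  have Bz: "B y = 0" for y
  proof (rule ccontr)
    assume ne: "B y \<noteq> 0"
    obtain x c where xW: "x \<in> range B" and x0: "x \<noteq> 0" and ex: "A *v x = c *\<^sub>R x"
      using sym_eig[OF sym W Binv] ne by blast
    have "is_eigenvalue A c" using x0 ex unfolding is_eigenvalue_def by blast
    hence c: "c = a \<or> c = b" using S by auto
    have Bx: "B x = 0"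
    proof -
      have "B x = (c*c - (a+b)*c + a*b) *\<^sub>R x" unfolding B_def using ex
        by (simp add: matrix_vector_mult_scaleR algebra_simps)
      also have "c*c - (a+b)*c + a*b = 0" using c by (auto simp: algebra_simps)
      finally show ?thesis by simp
    qed
    obtain w where xw: "x = B w" using xW by auto
    have "x \<bullet> x = w \<bullet> B x" using Bsym xw by simp
    hence "x \<bullet> x = 0" using Bx by simp
    thus False using x0 by simp
  qed
  show ?thesis
  proof
    fix y
    have "A *v (A *v y) - (a+b) *\<^sub>R (A *v y) + (a*b) *\<^sub>R y = 0" using Bz[of y] unfolding B_def .
    thus "A *v (A *v y) = (a+b) *\<^sub>R (A *v y) - (a*b) *\<^sub>R y" by (rule gen_ab)
  qed
qed

lemma entry_rel:
  fixes A :: "real^'n^'n"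
  assumes "\<forall>y. A *v (A *v y) = al *\<^sub>R (A *v y) - be *\<^sub>R y"
    and "x \<noteq> z" and "A$x$z = 0"
  shows "(\<Sum>k\<in>UNIV. A$x$k * A$k$z) = 0"
proof -
  have h: "A *v (A *v axis z 1) = al *\<^sub>R (A *v axis z 1) - be *\<^sub>R axis z 1"
    using assms(1) by blast
  have c: "A *v axis z 1 = column z A" by (rule matrix_vector_mult_basis)
  have l: "(A *v column z A)$x = (\<Sum>k\<in>UNIV. A$x$k * A$k$z)"
    by (simp add: matrix_vector_mult_def column_def)
  have ax: "axis z (1::real) $ x = 0" using assms(2) by (simp add: axis_def)
  have r: "(al *\<^sub>R (column z A) - be *\<^sub>R axis z 1)$x = 0"
    using assms(3) ax by (simp add: column_def)
  show ?thesis using h l r unfolding c by simp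
qed



lemma core:
  fixes E :: "'a::finite \<Rightarrow> 'a \<Rightarrow> bool" and d :: "'a \<Rightarrow> nat" and i :: nat
  assumes adj: "\<forall>u w. E u w \<longrightarrow> d w \<le> d u + 1"
    and c0: "card {x. d x = i} = 3" and c1: "card {x. d x = i+1} = 3"
    and p2: "\<forall>z. d z = i+2 \<longrightarrow> card {y. d y = i+1 \<and> E y z} = 2"
    and p1: "\<forall>y. d y = i+1 \<longrightarrow> card {x. d x = i \<and> E x y} = 2"
    and s1: "\<forall>x. d x = i \<longrightarrow> (\<exists>y. d y = i+1 \<and> E x y)"
    and s2: "\<forall>y. d y = i+1 \<longrightarrow> (\<exists>z. d z = i+2 \<and> E y z)"
  shows "\<exists>x z y. d x = i \<and> d z = i+2 \<and> E x y \<and> E y z \<and> (\<forall>k. E x k \<and> E k z \<longrightarrow> k = y)"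
proof -
  define D where "D y = {x. d x = i \<and> E x y}" for y
  define P where "P z = {y. d y = i+1 \<and> E y z}" for z
  define L1 where "L1 = {x. d x = i+1}"
  have claim: "\<exists>z y1 y2. d z = i+2 \<and> y1 \<in> P z \<and> y2 \<in> P z \<and> D y1 \<noteq> D y2"
  proof (rule ccontr)
    assume "\<not> ?thesis"
    hence H: "\<And>z y1 y2. d z = i+2 \<Longrightarrow> y1 \<in> P z \<Longrightarrow> y2 \<in> P z \<Longrightarrow> D y1 = D y2" by blast
    have other: "\<exists>w. d w = i+1 \<and> w \<noteq> y \<and> D w = D y" if y: "d y = i+1" for y
    proof -
      obtain z where z: "d z = i+2" "E y z" using s2 y by blast
      have cP: "card (P z) = 2" using p2 z unfolding P_def by blast
      have yP: "y \<in> P z" using y z unfolding P_def by simp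
      have "\<not> P z \<subseteq> {y}"
      proof
        assume "P z \<subseteq> {y}"
        hence "card (P z) \<le> card {y}" by (intro card_mono) auto
        thus False using cP by simp
      qed
      then obtain w where w: "w \<in> P z" "w \<noteq> y" by blast
      have "D w = D y" using H[OF z(1) w(1) yP] .
      moreover have "d w = i+1" using w unfolding P_def by simp
      ultimately show ?thesis using w by blast
    qed
    have allEq: "D y = D y'" if y: "d y = i+1" and y': "d y' = i+1" for y y'
    proof (cases "y = y'")
      case True thus ?thesis by simp
    next
      case False
      obtain w where w: "d w = i+1" "w \<noteq> y" "D w = D y" using other[OF y] by blast
      obtain w' where w': "d w' = i+1" "w' \<noteq> y'" "D w' = D y'" using other[OF y'] by blast
      show ?thesis
      proof (cases "w = y' \<or> w' = y")
        case True thus ?thesis using w w' by auto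
      next
        case False
        have sub: "{y, y'} \<subseteq> L1" using y y' unfolding L1_def by auto
        have "card (L1 - {y, y'}) = card L1 - card {y, y'}"
          using sub by (intro card_Diff_subset) auto
        also have "\<dots> = 1" using c1 \<open>y \<noteq> y'\<close> unfolding L1_def by simp
        finally have c: "card (L1 - {y, y'}) = 1" .
        have "w \<in> L1 - {y, y'}" "w' \<in> L1 - {y, y'}" using w w' False unfolding L1_def by auto
        hence "w = w'" using c by (metis card_1_singletonE singletonD)
        thus ?thesis using w w' by simp
      qed
    qed
    have "L1 \<noteq> {}"
    proof
      assume "L1 = {}" hence "card L1 = 0" by simp
      thus False using c1 unfolding L1_def by simp
    qed
    then obtain y0 where y0: "d y0 = i+1" unfolding L1_def by auto
    have "{x. d x = i} \<subseteq> D y0"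
    proof
      fix x assume "x \<in> {x. d x = i}"
      then obtain y where y: "d y = i+1" "E x y" and x: "d x = i" using s1 by blast
      have "x \<in> D y" using x y unfolding D_def by simp
      thus "x \<in> D y0" using allEq[OF y(1) y0] by simp
    qed
    hence "card {x. d x = i} \<le> card (D y0)" by (intro card_mono) auto
    moreover have "card (D y0) = 2" using p1 y0 unfolding D_def by blast
    ultimately show False using c0 by simp
  qed
  then obtain z y1 y2 where z: "d z = i+2" and y1: "y1 \<in> P z" and y2: "y2 \<in> P z"
    and ne: "D y1 \<noteq> D y2" by blast
  have y12: "y1 \<noteq> y2" using ne by auto
  have Pz: "P z = {y1, y2}"
  proof -
    have "card (P z) = 2" using p2 z unfolding P_def by blast
    moreover have "{y1, y2} \<subseteq> P z" using y1 y2 by auto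
    moreover have "card {y1, y2} = 2" using y12 by simp
    ultimately show ?thesis by (metis card_subset_eq finite)
  qed
  obtain x y y' where xy: "x \<in> D y" "x \<notin> D y'" and yy: "{y, y'} = {y1, y2}"
  proof -
    obtain x where "x \<in> D y1 \<and> x \<notin> D y2 \<or> x \<in> D y2 \<and> x \<notin> D y1" using ne by blast
    thus ?thesis using that by (metis insert_commute)
  qed
  have x: "d x = i" "E x y" using xy unfolding D_def by auto
  have yz: "E y z" using yy Pz unfolding P_def by (metis (mono_tags, lifting) insertI1 mem_Collect_eq)
  have uniq: "k = y" if k: "E x k" "E k z" for k
  proof -
    have "d k \<le> i+1" using adj k x by fastforce
    moreover have "d z \<le> d k + 1" using adj k by blast
    ultimately have "d k = i+1" using z by simp
    hence "k \<in> P z" using k unfolding P_def by simp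
    hence "k = y \<or> k = y'" using Pz yy by auto
    moreover have "k \<noteq> y'" using xy x k unfolding D_def by auto
    ultimately show ?thesis by blast
  qed
  show ?thesis using x z yz uniq by blast
qed


lemma reach:
  assumes "connected_graph E"
  shows "(E ^^ gdist E v w) v w"
proof -
  have "E\<^sup>*\<^sup>* v w" using assms unfolding connected_graph_def by blast
  then obtain n where "(E ^^ n) v w" unfolding rtranclp_power by blast
  thus ?thesis unfolding gdist_def by (rule LeastI)
qed

lemma dist_step:
  assumes "connected_graph E" "E u w"
  shows "gdist E v w \<le> gdist E v u + 1"
proof -
  have "(E ^^ Suc (gdist E v u)) v w" using relpowp_Suc_I[OF reach[OF assms(1)] assms(2)] .
  hence "(LEAST k. (E ^^ k) v w) \<le> Suc (gdist E v u)" by (rule Least_le)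
  thus ?thesis unfolding gdist_def by simp
qed

lemma dist0:
  assumes "connected_graph E" "gdist E v w = 0"
  shows "w = v"
proof -
  have "(E ^^ 0) v w" using reach[OF assms(1), of v w] assms(2) by simp
  thus ?thesis by simp
qed

lemma has_succ:
  assumes simple: "simple_graph E" and conn: "connected_graph E"
    and deg: "\<forall>u. degree E u \<ge> 3"
    and ind: "\<forall>i. independent_set E (layer E v i)"
    and cp: "card (predecessors E v w) \<le> 2"
  shows "\<exists>u. gdist E v u = gdist E v w + 1 \<and> E w u"
proof (rule ccontr)
  assume ns: "\<not> ?thesis"
  have "{u. E w u} \<subseteq> predecessors E v w"
  proof
    fix u assume "u \<in> {u. E w u}" hence wu: "E w u" by simp
    have uw: "E u w" using simple wu unfolding simple_graph_def by blast
    have a: "gdist E v u \<le> gdist E v w + 1" by (rule dist_step[OF conn wu])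
    have b: "gdist E v w \<le> gdist E v u + 1" by (rule dist_step[OF conn uw])
    have c: "gdist E v u \<noteq> gdist E v w"
    proof
      assume eq: "gdist E v u = gdist E v w"
      have "w \<in> layer E v (gdist E v w)" "u \<in> layer E v (gdist E v w)"
        using eq unfolding layer_def by auto
      thus False using ind wu unfolding independent_set_def by blast
    qed
    have "gdist E v u \<noteq> gdist E v w + 1" using ns wu by blast
    hence "gdist E v u + 1 = gdist E v w" using a b c by linarith
    thus "u \<in> predecessors E v w" unfolding predecessors_def using uw by simp
  qed
  hence "degree E w \<le> card (predecessors E v w)" unfolding degree_def by (intro card_mono) auto
  moreover have "degree E w \<ge> 3" using deg by blast
  ultimately show False using cp by linarith
qed

lemma small_sub:
  assumes "finite S" "card S \<le> 2"
  shows "\<exists>a b. S \<subseteq> {a, b}"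
proof -
  have "card S = 0 \<or> card S = 1 \<or> card S = 2" using assms(2) by linarith
  thus ?thesis
  proof (elim disjE)
    assume "card S = 0" hence "S = {}" using assms(1) by simp
    thus ?thesis by blast
  next
    assume "card S = 1" then obtain a where "S = {a}" by (rule card_1_singletonE)
    thus ?thesis by blast
  next
    assume "card S = 2" then obtain a b where "S = {a, b}" by (auto simp: card_2_iff)
    thus ?thesis by blast
  qed
qed

theorem mainTheorem6:
  fixes E :: "'n::finite \<Rightarrow> 'n \<Rightarrow> bool" and v :: 'n
  assumes "simple_graph E"
    and "connected_graph E"
    and "\<forall>u. degree E u \<ge> 3"
    and "\<forall>i. 2 \<le> i \<and> i \<le> ecc E v - 1 \<longrightarrow>
           (\<forall>w\<in>layer E v i. card (predecessors E v w) = 2)"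
    and "\<forall>i. independent_set E (layer E v i)"
    and "\<exists>j. 3 \<le> j \<and> j \<le> ecc E v - 1 \<and> card (layer E v j) = 3
            \<and> card (layer E v (j - 1)) = 3 \<and> card (layer E v (j - 2)) = 3"
  shows "qG E \<ge> 3"
proof -
  note simple = assms(1) and conn = assms(2) and deg = assms(3) and pr = assms(4) and ind = assms(5)
  obtain j where j: "3 \<le> j" "j \<le> ecc E v - 1" "card (layer E v j) = 3"
    "card (layer E v (j - 1)) = 3" "card (layer E v (j - 2)) = 3" using assms(6) by blast
  define d where "d = gdist E v"
  define i where "i = j - 2"
  have ij: "i + 1 = j - 1" "i + 2 = j" "j - 2 = i" using j(1) unfolding i_def by auto
  have predeq: "predecessors E v w = {x. d x = i \<and> E x w}" if "d w = i + 1" for w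
    using that unfolding predecessors_def d_def by auto
  have predeq2: "predecessors E v w = {x. d x = i + 1 \<and> E x w}" if "d w = i + 2" for w
    using that unfolding predecessors_def d_def by auto
  have adj: "\<forall>u w. E u w \<longrightarrow> d w \<le> d u + 1" unfolding d_def using dist_step[OF conn] by blast
  have c0: "card {x. d x = i} = 3" using j(5) unfolding layer_def d_def ij .
  have c1: "card {x. d x = i+1} = 3" using j(4) unfolding layer_def d_def ij .
  have p1: "\<forall>y. d y = i+1 \<longrightarrow> card {x. d x = i \<and> E x y} = 2"
  proof (intro allI impI)
    fix y assume y: "d y = i+1"
    have "2 \<le> j - 1" "j - 1 \<le> ecc E v - 1" using j by auto
    moreover have "y \<in> layer E v (j - 1)" using y ij unfolding layer_def d_def by simp
    ultimately have "card (predecessors E v y) = 2" using pr by blast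
    thus "card {x. d x = i \<and> E x y} = 2" using predeq[OF y] by simp
  qed
  have p2: "\<forall>z. d z = i+2 \<longrightarrow> card {y. d y = i+1 \<and> E y z} = 2"
  proof (intro allI impI)
    fix y assume y: "d y = i+2"
    have "2 \<le> j" "j \<le> ecc E v - 1" using j by auto
    moreover have "y \<in> layer E v j" using y ij unfolding layer_def d_def by simp
    ultimately have "card (predecessors E v y) = 2" using pr by blast
    thus "card {x. d x = i+1 \<and> E x y} = 2" using predeq2[OF y] by simp
  qed
  have s1: "\<forall>x. d x = i \<longrightarrow> (\<exists>y. d y = i+1 \<and> E x y)"
  proof (intro allI impI)
    fix x assume x: "d x = i"
    have "card (predecessors E v x) \<le> 2"
    proof (cases "i \<ge> 2")
      case True
      have "i \<le> ecc E v - 1" using j unfolding i_def by auto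
      moreover have "x \<in> layer E v i" using x unfolding layer_def d_def by simp
      ultimately have "card (predecessors E v x) = 2" using pr True by blast
      thus ?thesis by simp
    next
      case False
      hence i1: "i = 1" using j(1) unfolding i_def by auto
      have "predecessors E v x \<subseteq> {v}"
      proof
        fix u assume "u \<in> predecessors E v x"
        hence "gdist E v u = 0" using x i1 unfolding predecessors_def d_def by simp
        thus "u \<in> {v}" using dist0[OF conn] by blast
      qed
      hence "card (predecessors E v x) \<le> card {v}" by (intro card_mono) auto
      thus ?thesis by simp
    qed
    from has_succ[OF simple conn deg ind this] show "\<exists>y. d y = i+1 \<and> E x y"
      unfolding d_def[symmetric] x .
  qed
  have s2: "\<forall>y. d y = i+1 \<longrightarrow> (\<exists>z. d z = i+2 \<and> E y z)"
  proof (intro allI impI)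
    fix y assume y: "d y = i+1"
    have "card (predecessors E v y) = 2" using p1 predeq[OF y] y by simp
    hence "card (predecessors E v y) \<le> 2" by simp
    from has_succ[OF simple conn deg ind this] show "\<exists>z. d z = i+2 \<and> E y z"
      unfolding d_def[symmetric] y by simp
  qed
  obtain x z y where x: "d x = i" and z: "d z = i+2" and xy: "E x y" and yz: "E y z"
    and uniq: "\<forall>k. E x k \<and> E k z \<longrightarrow> k = y"
    using core[OF adj c0 c1 p2 p1 s1 s2] by blast
  have irr: "\<And>u. \<not> E u u" and sy: "\<And>u w. E u w \<Longrightarrow> E w u"
    using simple unfolding simple_graph_def by auto
  have xz: "x \<noteq> z" using x z by auto
  have nxz: "\<not> E x z"
  proof
    assume "E x z" hence "d z \<le> d x + 1" using adj by blast
    thus False using x z by simp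
  qed
  have yx: "y \<noteq> x" using xy irr by auto
  have yz': "y \<noteq> z" using yz irr by auto
  have nd: "3 \<le> num_distinct_eigenvalues A" if A: "A \<in> SG E" for A
  proof (rule ccontr)
    assume "\<not> 3 \<le> num_distinct_eigenvalues A"
    hence cle: "card {c. is_eigenvalue A c} \<le> 2" unfolding num_distinct_eigenvalues_def by simp
    have sym: "\<forall>i j. A$i$j = A$j$i" and pat: "\<And>i j. i \<noteq> j \<Longrightarrow> (A$i$j \<noteq> 0 \<longleftrightarrow> E i j)"
      using A unfolding SG_def by auto
    obtain a b where ab: "{c. is_eigenvalue A c} \<subseteq> {a, b}"
      using small_sub[OF eig_finite[OF sym] cle] by blast
    have rel: "\<forall>y. A *v (A *v y) = (a+b) *\<^sub>R (A *v y) - (a*b) *\<^sub>R y"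
      by (rule quad_rel[OF sym ab])
    have Axz: "A$x$z = 0" using pat[OF xz] nxz by simp
    have s0: "(\<Sum>k\<in>UNIV. A$x$k * A$k$z) = 0" by (rule entry_rel[OF rel xz Axz])
    have "(\<Sum>k\<in>UNIV. A$x$k * A$k$z) = A$x$y * A$y$z + (\<Sum>k\<in>UNIV - {y}. A$x$k * A$k$z)"
      by (rule sum.remove) auto
    also have "(\<Sum>k\<in>UNIV - {y}. A$x$k * A$k$z) = 0"
    proof (rule sum.neutral, rule ballI)
      fix k assume k: "k \<in> UNIV - {y}"
      show "A$x$k * A$k$z = 0"
      proof (cases "k = x \<or> k = z")
        case True thus ?thesis using Axz by auto
      next
        case False
        hence "\<not> (E x k \<and> E k z)" using uniq k by auto
        thus ?thesis using pat[of x k] pat[of k z] False by auto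
      qed
    qed
    finally have "A$x$y * A$y$z = 0" using s0 by simp
    moreover have "A$x$y \<noteq> 0" using pat[of x y] yx xy by auto
    moreover have "A$y$z \<noteq> 0" using pat[of y z] yz' yz by auto
    ultimately show False by simp
  qed
  define M :: "real^'n^'n" where "M = (\<chi> i j. if E i j then 1 else 0)"
  have "M \<in> SG E" unfolding SG_def M_def using sy by auto
  hence "\<exists>k. \<exists>A\<in>SG E. num_distinct_eigenvalues A = k" by blast
  hence "\<exists>A\<in>SG E. num_distinct_eigenvalues A = qG E" unfolding qG_def by (rule LeastI_ex)
  then obtain A where "A \<in> SG E" "num_distinct_eigenvalues A = qG E" by blast
  thus ?thesis using nd[of A] by simp
qed

end
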